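(* For any $x\in\mathrm{St}(d,r)$, $\|\nabla\mathcal{L}(x)\|_F\le2\|\Lambda(x)\|_F$.
   Context: $\langle A,B\rangle=\mathrm{Tr}(AB^\top)$; $\mathrm{sym}(A)=\frac12(A+A^\top)$, $\mathrm{skew}(A)=\frac12(A-A^\top)$; $\|\cdot\|_F$ Frobenius norm. $\mathrm{St}(d,r)=\{x\in\mathbb{R}^{d\times r}:x^\top x=I_r\}$. $f:\mathbb{R}^{d\times r}\to\mathbb{R}$ is $C^2$, $\mathrm{grad} f(x)=\mathrm{skew}(\nabla f(x)x^\top)x$. For $\lambda>0$, $\Lambda(x)=\mathrm{grad} f(x)+\lambda x(x^\top x-I_r)$. For $\gamma>0$, the merit function is $\mathcal{L}(x)=f(x)-\frac12\langle\mathrm{sym}(x^\top\nabla f(x)),x^\top x-I_r\rangle+\frac\gamma4\|x^\top x-I_r\|_F^2$. *)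

theory Defs
  imports "HOL-Analysis.Analysis"
begin

text \<open>Matrices in R^{d x r} are modelled as real^'r^'d (rows indexed by 'd, columns by 'r).
The inner product on this type is the Frobenius inner product, the norm is the Frobenius norm.\<close>

definition msym :: "real^'n^'n \<Rightarrow> real^'n^'n" where
  "msym A = (1/2) *\<^sub>R (A + transpose A)"

definition mskew :: "real^'n^'n \<Rightarrow> real^'n^'n" where
  "mskew A = (1/2) *\<^sub>R (A - transpose A)"

definition stiefel :: "(real^'r^'d) set" where
  "stiefel = {x. transpose x ** x = mat 1}"

text \<open>Riemannian gradient, given the Euclidean gradient field G of f.\<close>
definition rgrad :: "(real^'r^'d \<Rightarrow> real^'r^'d) \<Rightarrow> real^'r^'d \<Rightarrow> real^'r^'d" where
  "rgrad G x = mskew (G x ** transpose x) ** x"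

definition Lam :: "real \<Rightarrow> (real^'r^'d \<Rightarrow> real^'r^'d) \<Rightarrow> real^'r^'d \<Rightarrow> real^'r^'d" where
  "Lam lam G x = rgrad G x + lam *\<^sub>R (x ** (transpose x ** x - mat 1))"

definition merit :: "real \<Rightarrow> (real^'r^'d \<Rightarrow> real) \<Rightarrow> (real^'r^'d \<Rightarrow> real^'r^'d) \<Rightarrow> real^'r^'d \<Rightarrow> real" where
  "merit gam f G x = f x - (1/2) * (msym (transpose x ** G x) \<bullet> (transpose x ** x - mat 1))
     + (gam / 4) * (norm (transpose x ** x - mat 1))^2"

end

theory Submission imports Defs begin
lemma bb_mult: "bounded_bilinear ((**) :: real^'k^'m \<Rightarrow> real^'n^'k \<Rightarrow> real^'n^'m)"
  unfolding bilinear_conv_bounded_bilinear[symmetric] bilinear_def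
  by (auto intro!: linearI simp: matrix_add_ldistrib matrix_scalar_ac scalar_matrix_assoc[symmetric])
     (vector matrix_matrix_mult_def sum.distrib field_simps)

lemma bl_transpose: "bounded_linear (transpose :: real^'n^'m \<Rightarrow> real^'m^'n)"
  unfolding linear_conv_bounded_linear[symmetric]
  by (auto intro!: linearI simp: transpose_def vec_eq_iff)

lemma bl_msym: "bounded_linear (msym :: real^'n^'n \<Rightarrow> real^'n^'n)"
  unfolding linear_conv_bounded_linear[symmetric]
  by (auto intro!: linearI simp: msym_def transpose_def vec_eq_iff algebra_simps)

lemma im_left: "((A::real^'k^'m) ** B) \<bullet> (C::real^'n^'m) = B \<bullet> (transpose A ** C)"
proof -
  have "(A ** B) \<bullet> C = (\<Sum>i\<in>UNIV. \<Sum>j\<in>UNIV. \<Sum>k\<in>UNIV. A$i$k * B$k$j * C$i$j)"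
    by (simp add: inner_vec_def matrix_matrix_mult_def sum_distrib_right)
  also have "\<dots> = (\<Sum>i\<in>UNIV. \<Sum>k\<in>UNIV. \<Sum>j\<in>UNIV. A$i$k * B$k$j * C$i$j)"
    by (rule sum.cong[OF refl], rule sum.swap)
  also have "\<dots> = (\<Sum>k\<in>UNIV. \<Sum>i\<in>UNIV. \<Sum>j\<in>UNIV. A$i$k * B$k$j * C$i$j)"
    by (rule sum.swap)
  also have "\<dots> = (\<Sum>k\<in>UNIV. \<Sum>j\<in>UNIV. \<Sum>i\<in>UNIV. A$i$k * B$k$j * C$i$j)"
    by (rule sum.cong[OF refl], rule sum.swap)
  also have "\<dots> = B \<bullet> (transpose A ** C)"
    by (simp add: inner_vec_def matrix_matrix_mult_def transpose_def sum_distrib_left ac_simps)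
  finally show ?thesis .
qed

lemma im_right: "((A::real^'k^'m) ** B) \<bullet> (C::real^'n^'m) = A \<bullet> (C ** transpose B)"
proof -
  have "(A ** B) \<bullet> C = (\<Sum>i\<in>UNIV. \<Sum>j\<in>UNIV. \<Sum>k\<in>UNIV. A$i$k * B$k$j * C$i$j)"
    by (simp add: inner_vec_def matrix_matrix_mult_def sum_distrib_right)
  also have "\<dots> = (\<Sum>i\<in>UNIV. \<Sum>k\<in>UNIV. \<Sum>j\<in>UNIV. A$i$k * B$k$j * C$i$j)"
    by (rule sum.cong[OF refl], rule sum.swap)
  also have "\<dots> = A \<bullet> (C ** transpose B)"
    by (simp add: inner_vec_def matrix_matrix_mult_def transpose_def sum_distrib_left ac_simps)
  finally show ?thesis .
qed

lemma inner_transpose: "transpose (A::real^'n^'m) \<bullet> transpose B = A \<bullet> B"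
proof -
  have "transpose A \<bullet> transpose B = (\<Sum>j\<in>UNIV. \<Sum>i\<in>UNIV. A$i$j * B$i$j)"
    by (simp add: inner_vec_def transpose_def)
  also have "\<dots> = (\<Sum>i\<in>UNIV. \<Sum>j\<in>UNIV. A$i$j * B$i$j)"
    by (rule sum.swap)
  also have "\<dots> = A \<bullet> B" by (simp add: inner_vec_def)
  finally show ?thesis .
qed

lemma norm_decomp:
  fixes x :: "real^'r^'d" and K :: "real^'r^'r" and P :: "real^'r^'d"
  assumes "transpose x ** x = mat 1" "transpose x ** P = 0"
  shows "(norm (x ** K + P))^2 = (norm K)^2 + (norm P)^2"
proof -
  have a: "(x ** K) \<bullet> (x ** K) = K \<bullet> K"
    by (simp add: im_left matrix_mul_assoc assms(1))
  have b: "(x ** K) \<bullet> P = 0"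
    by (simp add: im_left assms(2))
  have c: "P \<bullet> (x ** K) = 0" using b by (simp add: inner_commute)
  have "(x ** K + P) \<bullet> (x ** K + P) = (x ** K) \<bullet> (x ** K) + (x ** K) \<bullet> P + (P \<bullet> (x ** K) + P \<bullet> P)"
    by (simp only: inner_add_left inner_add_right)
  then show ?thesis unfolding power2_norm_eq_inner using a b c by simp
qed

lemma mat_sub_ldistrib: "(A::real^'k^'m) ** (B - C) = A ** B - A ** C"
  by (simp add: matrix_matrix_mult_def vec_eq_iff sum_subtractf algebra_simps)

lemma mat_sub_rdistrib: "((B::real^'k^'m) - C) ** (A::real^'n^'k) = B ** A - C ** A"
  by (simp add: matrix_matrix_mult_def vec_eq_iff sum_subtractf left_diff_distrib)

lemma sym_skew: "(A::real^'n^'n) - msym A = mskew A"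
proof -
  have e: "A - msym A = (1/2) *\<^sub>R (2 *\<^sub>R A) - (1/2) *\<^sub>R (A + transpose A)"
    by (simp add: msym_def)
  have h: "(A + A) - (A + transpose A) = A - transpose A" by simp
  show ?thesis
    by (simp only: e mskew_def scaleR_2 scaleR_diff_right[symmetric] h)
qed

lemma skew2: "(A::real^'n^'n) - transpose A = 2 *\<^sub>R mskew A"
  by (simp add: mskew_def algebra_simps)

theorem lemma12:
  fixes f :: "real^'r^'d \<Rightarrow> real"
    and G :: "real^'r^'d \<Rightarrow> real^'r^'d"
    and H :: "real^'r^'d \<Rightarrow> ((real^'r^'d) \<Rightarrow>\<^sub>L (real^'r^'d))"
    and lam gam :: real
    and x :: "real^'r^'d"
  assumes f_grad: "\<And>y. (f has_derivative (\<lambda>h. G y \<bullet> h)) (at y)"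
    and G_deriv: "\<And>y. (G has_derivative blinfun_apply (H y)) (at y)"
    and H_cont: "continuous_on UNIV H"
    and lam_pos: "lam > 0"
    and gam_pos: "gam > 0"
    and x_St: "x \<in> stiefel"
  shows "\<exists>g. ((merit gam f G) has_derivative (\<lambda>h. g \<bullet> h)) (at x)
             \<and> norm g \<le> 2 * norm (Lam lam G x)"
proof -
  have xx: "transpose x ** x = mat 1" using x_St by (simp add: stiefel_def)
  have C0: "transpose x ** x - mat 1 = 0" using xx by simp
  define S where "S = msym (transpose x ** G x)"
  define g where "g = G x - x ** S"
  have dT: "((\<lambda>y. transpose y) has_derivative (\<lambda>h. transpose h)) (at x)"
    using bounded_linear.has_derivative[OF bl_transpose has_derivative_ident] .
  have dM: "((\<lambda>y. transpose y ** G y) has_derivative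
      (\<lambda>h. transpose x ** H x h + transpose h ** G x)) (at x)"
    using bounded_bilinear.FDERIV[OF bb_mult dT G_deriv] .
  have dC: "((\<lambda>y. transpose y ** y - mat 1) has_derivative
      (\<lambda>h. (transpose x ** h + transpose h ** x) - 0)) (at x)"
    by (intro has_derivative_diff has_derivative_const
        bounded_bilinear.FDERIV[OF bb_mult dT has_derivative_ident])
  have dS: "((\<lambda>y. msym (transpose y ** G y)) has_derivative
      (\<lambda>h. msym (transpose x ** H x h + transpose h ** G x))) (at x)"
    using bounded_linear.has_derivative[OF bl_msym dM] .
  let ?C = "transpose x ** x - mat 1"
  let ?dC = "\<lambda>h. (transpose x ** h + transpose h ** x) - 0"
  let ?dS = "\<lambda>h. msym (transpose x ** H x h + transpose h ** G x)"
  have D: "((\<lambda>y. f y - (1/2) * (msym (transpose y ** G y) \<bullet> (transpose y ** y - mat 1))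
      + (gam/4) * ((transpose y ** y - mat 1) \<bullet> (transpose y ** y - mat 1))) has_derivative
      (\<lambda>h. G x \<bullet> h - (1/2) * (S \<bullet> ?dC h + ?dS h \<bullet> ?C) + (gam/4) * (?C \<bullet> ?dC h + ?dC h \<bullet> ?C))) (at x)"
    unfolding S_def
    by (intro has_derivative_add has_derivative_diff has_derivative_mult_right f_grad
        has_derivative_inner dS dC)
  have St: "transpose S = S" by (simp add: S_def msym_def transpose_def vec_eq_iff algebra_simps)
  have eq: "G x \<bullet> h - (1/2) * (S \<bullet> ?dC h + ?dS h \<bullet> ?C) + (gam/4) * (?C \<bullet> ?dC h + ?dC h \<bullet> ?C)
      = g \<bullet> h" for h
  proof -
    have e1: "S \<bullet> (transpose x ** h) = h \<bullet> (x ** S)"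
      by (simp add: inner_commute[of S] im_left)
    have e2: "S \<bullet> (transpose h ** x) = h \<bullet> (x ** S)"
    proof -
      have "S \<bullet> (transpose h ** x) = transpose h \<bullet> (S ** transpose x)"
        by (simp add: inner_commute[of S] im_right)
      also have "\<dots> = transpose h \<bullet> transpose (x ** S)"
        by (simp add: matrix_transpose_mul St)
      finally show ?thesis by (simp add: inner_transpose)
    qed
    show ?thesis using C0
      by (simp add: g_def inner_add_right inner_diff_left e1 e2 inner_commute[of h])
  qed
  have Dm: "(merit gam f G has_derivative (\<lambda>h. g \<bullet> h)) (at x)"
  proof -
    have "merit gam f G = (\<lambda>y. f y - (1/2) * (msym (transpose y ** G y) \<bullet> (transpose y ** y - mat 1))
      + (gam/4) * ((transpose y ** y - mat 1) \<bullet> (transpose y ** y - mat 1)))"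
      by (simp add: fun_eq_iff merit_def power2_norm_eq_inner)
    with D eq show ?thesis by simp
  qed
  define A where "A = transpose x ** G x"
  define P where "P = G x - x ** A"
  define K where "K = mskew A"
  have xP: "transpose x ** P = 0"
    by (simp add: P_def A_def mat_sub_ldistrib matrix_mul_assoc xx)
  have g_eq: "g = x ** K + P"
  proof -
    have "g = x ** (A - msym A) + P"
      by (simp add: g_def S_def P_def A_def mat_sub_ldistrib)
    thus ?thesis by (simp add: sym_skew K_def)
  qed
  have L_eq: "2 *\<^sub>R Lam lam G x = x ** (2 *\<^sub>R K) + P"
  proof -
    define M where "M = G x ** transpose x"
    have "mskew M ** x = (1/2) *\<^sub>R (M ** x - transpose M ** x)"
      by (simp add: mskew_def scalar_matrix_assoc[symmetric] mat_sub_rdistrib)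
    hence "2 *\<^sub>R Lam lam G x = M ** x - transpose M ** x"
      by (simp add: Lam_def rgrad_def C0 M_def)
    also have "\<dots> = G x ** (transpose x ** x) - x ** (transpose (G x) ** x)"
      by (simp add: M_def matrix_transpose_mul matrix_mul_assoc)
    finally have "2 *\<^sub>R Lam lam G x = G x ** (transpose x ** x) - x ** (transpose (G x) ** x)" .
    also have "\<dots> = x ** (A - transpose A) + P"
      by (simp add: xx A_def P_def mat_sub_ldistrib matrix_transpose_mul)
    finally show ?thesis by (simp add: skew2 K_def)
  qed
  have "(norm g)^2 \<le> (norm (2 *\<^sub>R Lam lam G x))^2"
    unfolding g_eq L_eq using norm_decomp[OF xx xP, of K] norm_decomp[OF xx xP, of "2 *\<^sub>R K"]
    by (simp add: power_mult_distrib)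
  hence "norm g \<le> norm (2 *\<^sub>R Lam lam G x)"
    by (rule power2_le_imp_le) simp
  with Dm show ?thesis by auto
qed

end
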